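(* Let $H$ and $G$ be graphs with $G\in\operatorname{obs}^\ast(H)$. Then, up to isomorphism, \[\operatorname{obs}(G)=(\operatorname{obs}(H)\setminus\{G\})\cup\operatorname{obs}^\ast(G).\]
   Context: All graphs are finite, simple and loopless. A full-homomorphism $\varphi\colon G\to H$ is a map $V(G)\to V(H)$ such that for all $x,y\in V(G)$, $xy\in E(G)$ if and only if $\varphi(x)\varphi(y)\in E(H)$. A full $H$-colouring of $G$ is a full-homomorphism $G\to H$. A minimal $H$-obstruction is a graph $G$ that admits no full $H$-colouring while every proper induced subgraph of $G$ admits one; $\operatorname{obs}(H)$ denotes the set of minimal $H$-obstructions (up to isomorphism), and $\operatorname{obs}^\ast(H)$ the set of minimal $H$-obstructions on exactly $|V(H)|+1$ vertices. *)

theory Defs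
  imports Main
begin

type_synonym 'a sgraph = "'a set \<times> ('a \<times> 'a) set"

definition verts :: "'a sgraph \<Rightarrow> 'a set" where "verts G = fst G"
definition edges :: "'a sgraph \<Rightarrow> ('a \<times> 'a) set" where "edges G = snd G"

definition is_graph :: "'a sgraph \<Rightarrow> bool" where
  "is_graph G \<longleftrightarrow> finite (verts G) \<and> edges G \<subseteq> verts G \<times> verts G
     \<and> sym (edges G) \<and> irrefl (edges G)"

definition full_hom :: "'a sgraph \<Rightarrow> 'b sgraph \<Rightarrow> ('a \<Rightarrow> 'b) \<Rightarrow> bool" where
  "full_hom G H \<phi> \<longleftrightarrow> (\<forall>x\<in>verts G. \<phi> x \<in> verts H) \<and>
     (\<forall>x\<in>verts G. \<forall>y\<in>verts G. (x, y) \<in> edges G \<longleftrightarrow> (\<phi> x, \<phi> y) \<in> edges H)"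

definition full_colourable :: "'a sgraph \<Rightarrow> 'b sgraph \<Rightarrow> bool" where
  "full_colourable G H \<longleftrightarrow> (\<exists>\<phi>. full_hom G H \<phi>)"

definition induced :: "'a sgraph \<Rightarrow> 'a set \<Rightarrow> 'a sgraph" where
  "induced G S = (S, edges G \<inter> (S \<times> S))"

definition min_obs :: "'b sgraph \<Rightarrow> 'a sgraph \<Rightarrow> bool" where
  "min_obs H G \<longleftrightarrow> is_graph G \<and> \<not> full_colourable G H \<and>
     (\<forall>S. S \<subset> verts G \<longrightarrow> full_colourable (induced G S) H)"

definition min_obs_star :: "'b sgraph \<Rightarrow> 'a sgraph \<Rightarrow> bool" where
  "min_obs_star H G \<longleftrightarrow> min_obs H G \<and> card (verts G) = card (verts H) + 1"

definition graph_iso :: "'a sgraph \<Rightarrow> 'b sgraph \<Rightarrow> bool" where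
  "graph_iso G K \<longleftrightarrow> (\<exists>f. bij_betw f (verts G) (verts K) \<and>
     (\<forall>x\<in>verts G. \<forall>y\<in>verts G. (x, y) \<in> edges G \<longleftrightarrow> (f x, f y) \<in> edges K))"

end

theory Submission
  imports Defs
begin

definition pd :: "'a sgraph \<Rightarrow> bool" where
  "pd K \<longleftrightarrow> (\<forall>x\<in>verts K. \<forall>y\<in>verts K. x \<noteq> y \<longrightarrow> (x,y) \<notin> edges K \<longrightarrow>
      (\<exists>z\<in>verts K. (x,z) \<in> edges K \<longleftrightarrow> (y,z) \<notin> edges K))"

lemma fh_comp:
  assumes "full_hom A B f" "full_hom B C g" shows "full_hom A C (g \<circ> f)"
  using assms unfolding full_hom_def by auto

lemma fh_restrict:
  assumes "full_hom A B f" "S \<subseteq> verts A" shows "full_hom (induced A S) B f"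
  using assms unfolding full_hom_def induced_def verts_def edges_def by auto

lemma fh_into:
  assumes "full_hom A B f" "f ` verts A \<subseteq> T" shows "full_hom A (induced B T) f"
  using assms unfolding full_hom_def induced_def verts_def edges_def by auto

lemma verts_induced[simp]: "verts (induced A S) = S"
  by (simp add: induced_def verts_def)
lemma edges_induced[simp]: "edges (induced A S) = edges A \<inter> (S \<times> S)"
  by (simp add: induced_def edges_def)

lemma min_obs_nonempty:
  assumes "min_obs X K" shows "verts K \<noteq> {}"
proof
  assume e: "verts K = {}"
  have "full_hom K X (\<lambda>_. undefined)" unfolding full_hom_def e by simp
  with assms show False unfolding min_obs_def full_colourable_def by blast
qed

lemma min_obs_pd:
  assumes mo: "min_obs X K" shows "pd K"
  unfolding pd_def
proof (intro ballI impI, rule ccontr)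
  fix x y assume x: "x \<in> verts K" and y: "y \<in> verts K" and ne: "x \<noteq> y" and
    nxy: "(x,y) \<notin> edges K" and tw0: "\<not> (\<exists>z\<in>verts K. (x,z) \<in> edges K \<longleftrightarrow> (y,z) \<notin> edges K)"
  have tw: "\<And>z. z \<in> verts K \<Longrightarrow> (x,z) \<in> edges K \<longleftrightarrow> (y,z) \<in> edges K" using tw0 by blast
  have g: "is_graph K" using mo by (simp add: min_obs_def)
  hence sy: "sym (edges K)" and ir: "irrefl (edges K)" by (auto simp: is_graph_def)
  have "verts K - {x} \<subset> verts K" using x by auto
  then obtain \<phi> where ph: "full_hom (induced K (verts K - {x})) X \<phi>"
    using mo unfolding min_obs_def full_colourable_def by blast
  have yin: "y \<in> verts K - {x}" using y ne by auto
  have ph1: "\<And>u. u \<in> verts K - {x} \<Longrightarrow> \<phi> u \<in> verts X" using ph by (simp add: full_hom_def)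
  have ph2: "\<And>u v. u \<in> verts K - {x} \<Longrightarrow> v \<in> verts K - {x} \<Longrightarrow> (u,v) \<in> edges K \<longleftrightarrow> (\<phi> u, \<phi> v) \<in> edges X"
    using ph by (auto simp: full_hom_def)
  define \<psi> where "\<psi> = \<phi>(x := \<phi> y)"
  have yy: "(\<phi> y, \<phi> y) \<notin> edges X" using ph2[OF yin yin] ir by (auto simp: irrefl_def)
  have "full_hom K X \<psi>"
    unfolding full_hom_def
  proof (intro conjI ballI)
    fix u assume "u \<in> verts K" thus "\<psi> u \<in> verts X" using ph1 yin by (auto simp: \<psi>_def)
  next
    fix u v assume u: "u \<in> verts K" and v: "v \<in> verts K"
    have tw': "\<And>z. z \<in> verts K \<Longrightarrow> (z,x) \<in> edges K \<longleftrightarrow> (z,y) \<in> edges K"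
      using tw sy by (meson symD)
    show "(u, v) \<in> edges K \<longleftrightarrow> (\<psi> u, \<psi> v) \<in> edges X"
    proof (cases "u = x")
      case True note ux = this
      show ?thesis
      proof (cases "v = x")
        case True thus ?thesis using ux ir yy by (auto simp: \<psi>_def irrefl_def)
      next
        case False
        hence "v \<in> verts K - {x}" using v by auto
        thus ?thesis using ux False tw[OF v] ph2[OF yin] by (auto simp: \<psi>_def)
      qed
    next
      case False
      hence uin: "u \<in> verts K - {x}" using u by auto
      show ?thesis
      proof (cases "v = x")
        case True thus ?thesis using False tw'[OF u] ph2[OF uin yin] by (auto simp: \<psi>_def)
      next
        case vx: False
        hence "v \<in> verts K - {x}" using v by auto
        thus ?thesis using False vx ph2[OF uin] by (auto simp: \<psi>_def)
      qed
    qed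
  qed
  thus False using mo unfolding min_obs_def full_colourable_def by blast
qed


lemma pd_inj:
  assumes f: "full_hom A B f" and p: "pd A" and ir: "irrefl (edges A)"
  shows "inj_on f (verts A)"
proof (rule inj_onI, rule ccontr)
  fix x y assume x: "x \<in> verts A" and y: "y \<in> verts A" and e: "f x = f y" and ne: "x \<noteq> y"
  have xx: "(f x, f x) \<notin> edges B" using f x ir by (auto simp: full_hom_def irrefl_def)
  have nxy: "(x,y) \<notin> edges A" using f x y e xx by (auto simp: full_hom_def)
  have "\<forall>z\<in>verts A. (x,z) \<in> edges A \<longleftrightarrow> (y,z) \<in> edges A" using f x y e by (auto simp: full_hom_def)
  thus False using p x y ne nxy unfolding pd_def by blast
qed

lemma sumner:
  assumes g: "is_graph K" and p: "pd K" and ne: "verts K \<noteq> {}"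
  shows "\<exists>v\<in>verts K. pd (induced K (verts K - {v}))"
proof (rule ccontr)
  assume nv: "\<not> ?thesis"
  have fin: "finite (verts K)" and sub: "edges K \<subseteq> verts K \<times> verts K" and sy: "sym (edges K)"
    and ir: "irrefl (edges K)" using g by (auto simp: is_graph_def)
  define N where "N x = {z \<in> verts K. (x,z) \<in> edges K}" for x
  have bad: "\<exists>a\<in>verts K. \<exists>b\<in>verts K. a \<noteq> x \<and> b \<noteq> x \<and> a \<noteq> b \<and> (a,b) \<notin> edges K \<and>
      (a,x) \<in> edges K \<and> (b,x) \<notin> edges K \<and> (\<forall>z\<in>verts K - {x}. (a,z) \<in> edges K \<longleftrightarrow> (b,z) \<in> edges K)"
    if x: "x \<in> verts K" for x
  proof -
    have np: "\<not> pd (induced K (verts K - {x}))" using nv x by blast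
    have "\<exists>a\<in>verts K - {x}. \<exists>b\<in>verts K - {x}. a \<noteq> b \<and> (a,b) \<notin> edges K \<and>
       (\<forall>z\<in>verts K - {x}. (a,z) \<in> edges K \<longleftrightarrow> (b,z) \<in> edges K)"
      using np unfolding pd_def verts_induced edges_induced by blast
    then obtain a b where a: "a \<in> verts K - {x}" and b: "b \<in> verts K - {x}" and ab: "a \<noteq> b"
      and nab: "(a,b) \<notin> edges K" and tw: "\<forall>z\<in>verts K - {x}. (a,z) \<in> edges K \<longleftrightarrow> (b,z) \<in> edges K"
      by blast
    from p a b ab nab obtain z where z: "z \<in> verts K" and d: "(a,z) \<in> edges K \<longleftrightarrow> (b,z) \<notin> edges K"
      unfolding pd_def by blast
    have zx: "z = x" using tw z d by blast
    show ?thesis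
    proof (cases "(a,x) \<in> edges K")
      case True thus ?thesis using a b ab nab tw d zx by blast
    next
      case False
      have "(b,a) \<notin> edges K" using nab sy by (meson symD)
      thus ?thesis using a b ab False tw d zx by blast
    qed
  qed
  have nfin: "finite (N x)" for x using fin by (simp add: N_def)
  obtain v where v: "v \<in> verts K" and vmax: "\<forall>x\<in>verts K. card (N x) \<le> card (N v)"
  proof -
    have "finite ((\<lambda>x. card (N x)) ` verts K)" using fin by simp
    then obtain v where "v \<in> verts K" "card (N v) = Max ((\<lambda>x. card (N x)) ` verts K)"
      using ne by (metis (no_types, lifting) Max_in empty_is_image imageE)
    thus ?thesis using that fin by (metis (no_types, lifting) Max_ge finite_imageI image_eqI)
  qed
  obtain a b where a: "a \<in> verts K" and b: "b \<in> verts K" and av: "a \<noteq> v" and bv: "b \<noteq> v" and ab: "a \<noteq> b"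
    and nab: "(a,b) \<notin> edges K" and eav: "(a,v) \<in> edges K" and nbv: "(b,v) \<notin> edges K"
    and tw1: "\<forall>z\<in>verts K - {v}. (a,z) \<in> edges K \<longleftrightarrow> (b,z) \<in> edges K"
    using bad[OF v] by blast
  obtain c d where c: "c \<in> verts K" and d: "d \<in> verts K" and cb: "c \<noteq> b" and db: "d \<noteq> b" and cd: "c \<noteq> d"
    and ncd: "(c,d) \<notin> edges K" and ecb: "(c,b) \<in> edges K" and ndb: "(d,b) \<notin> edges K"
    and tw2: "\<forall>z\<in>verts K - {b}. (c,z) \<in> edges K \<longleftrightarrow> (d,z) \<in> edges K"
    using bad[OF b] by blast
  have ebc: "(b,c) \<in> edges K" using ecb sy by (meson symD)
  have cv: "c \<noteq> v" using ebc nbv by auto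
  have "(a,c) \<in> edges K" using tw1 c cv ebc by blast
  hence "(c,a) \<in> edges K" using sy by (meson symD)
  hence "(d,a) \<in> edges K" using tw2 a ab by blast
  hence ead: "(a,d) \<in> edges K" using sy by (meson symD)
  have dv: "d = v"
  proof (rule ccontr)
    assume "d \<noteq> v"
    hence "(b,d) \<in> edges K" using tw1 d ead by blast
    hence "(d,b) \<in> edges K" using sy by (meson symD)
    thus False using ndb by simp
  qed
  have "N c = insert b (N v)"
  proof
    show "N c \<subseteq> insert b (N v)" using tw2 dv unfolding N_def by auto
    show "insert b (N v) \<subseteq> N c" using tw2 dv b ecb unfolding N_def by auto
  qed
  moreover have "b \<notin> N v"
  proof
    assume "b \<in> N v" hence "(v,b) \<in> edges K" by (simp add: N_def)
    hence "(b,v) \<in> edges K" using sy by (meson symD)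
    thus False using nbv by simp
  qed
  ultimately have "card (N c) = card (N v) + 1" using nfin by simp
  thus False using vmax c by fastforce
qed

lemma obs_bound:
  assumes mo: "min_obs X K" and gX: "is_graph X"
  shows "card (verts K) \<le> card (verts X) + 1"
proof -
  have g: "is_graph K" using mo by (simp add: min_obs_def)
  obtain v where v: "v \<in> verts K" and p: "pd (induced K (verts K - {v}))"
    using sumner[OF g min_obs_pd[OF mo] min_obs_nonempty[OF mo]] by blast
  have "verts K - {v} \<subset> verts K" using v by auto
  then obtain \<phi> where ph: "full_hom (induced K (verts K - {v})) X \<phi>"
    using mo unfolding min_obs_def full_colourable_def by blast
  have ir: "irrefl (edges (induced K (verts K - {v})))" using g by (auto simp: is_graph_def irrefl_def)
  have "inj_on \<phi> (verts K - {v})" using pd_inj[OF ph p ir] by simp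
  moreover have "\<phi> ` (verts K - {v}) \<subseteq> verts X" using ph by (auto simp: full_hom_def)
  ultimately have "card (verts K - {v}) \<le> card (verts X)"
    using gX by (meson card_inj_on_le is_graph_def)
  moreover have "finite (verts K)" using g by (simp add: is_graph_def)
  ultimately show ?thesis using v by (simp add: card_Diff_singleton)
qed

lemma obs_surj:
  assumes f: "full_hom A G \<phi>" and mo: "min_obs H G" and nc: "\<not> full_colourable A H"
  shows "\<phi> ` verts A = verts G"
proof (rule ccontr)
  assume ne: "\<phi> ` verts A \<noteq> verts G"
  have "\<phi> ` verts A \<subseteq> verts G" using f by (auto simp: full_hom_def)
  with ne have "\<phi> ` verts A \<subset> verts G" by auto
  then obtain \<chi> where "full_hom (induced G (\<phi> ` verts A)) H \<chi>"
    using mo unfolding min_obs_def full_colourable_def by blast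
  moreover have "full_hom A (induced G (\<phi> ` verts A)) \<phi>" using fh_into[OF f] by simp
  ultimately have "full_hom A H (\<chi> \<circ> \<phi>)" using fh_comp by blast
  thus False using nc unfolding full_colourable_def by blast
qed


lemma H_to_G:
  assumes gH: "is_graph H" and gG: "is_graph G" and ms: "min_obs_star H G"
  shows "\<exists>\<psi>. full_hom H G \<psi>"
proof -
  have mo: "min_obs H G" and cd: "card (verts G) = card (verts H) + 1" using ms by (auto simp: min_obs_star_def)
  obtain v where v: "v \<in> verts G" and p: "pd (induced G (verts G - {v}))"
    using sumner[OF gG min_obs_pd[OF mo] min_obs_nonempty[OF mo]] by blast
  define S where "S = verts G - {v}"
  have "S \<subset> verts G" using v by (auto simp: S_def)
  then obtain \<phi> where ph: "full_hom (induced G S) H \<phi>"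
    using mo unfolding min_obs_def full_colourable_def by blast
  have ir: "irrefl (edges (induced G S))" using gG by (auto simp: is_graph_def irrefl_def)
  have inj: "inj_on \<phi> S" using pd_inj[OF ph p[folded S_def] ir] by simp
  have im: "\<phi> ` S \<subseteq> verts H" using ph by (auto simp: full_hom_def)
  have finG: "finite (verts G)" using gG by (simp add: is_graph_def)
  have cS: "card S = card (verts H)" using cd v finG by (simp add: S_def card_Diff_singleton)
  have finH: "finite (verts H)" using gH by (simp add: is_graph_def)
  have "card (\<phi> ` S) = card (verts H)" using inj cS by (simp add: card_image)
  hence eqim: "\<phi> ` S = verts H" using im finH by (simp add: card_subset_eq)
  hence bij: "bij_betw \<phi> S (verts H)" using inj by (simp add: bij_betw_def)
  define \<psi> where "\<psi> = inv_into S \<phi>"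
  have ps1: "\<And>x. x \<in> verts H \<Longrightarrow> \<psi> x \<in> S" using eqim by (auto simp: \<psi>_def inv_into_into)
  have ps2: "\<And>x. x \<in> verts H \<Longrightarrow> \<phi> (\<psi> x) = x" using eqim by (auto simp: \<psi>_def f_inv_into_f)
  have "full_hom H G \<psi>"
    unfolding full_hom_def
  proof (intro conjI ballI)
    fix x assume "x \<in> verts H" thus "\<psi> x \<in> verts G" using ps1 by (auto simp: S_def)
  next
    fix x y assume x: "x \<in> verts H" and y: "y \<in> verts H"
    have "(\<psi> x, \<psi> y) \<in> edges G \<longleftrightarrow> (\<psi> x, \<psi> y) \<in> edges (induced G S)" using ps1[OF x] ps1[OF y] by simp
    also have "\<dots> \<longleftrightarrow> (\<phi> (\<psi> x), \<phi> (\<psi> y)) \<in> edges H" using ph ps1[OF x] ps1[OF y] by (simp add: full_hom_def)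
    finally show "(x, y) \<in> edges H \<longleftrightarrow> (\<psi> x, \<psi> y) \<in> edges G" using ps2[OF x] ps2[OF y] by simp
  qed
  thus ?thesis by blast
qed

theorem theorem3p5:
  fixes H :: "'a sgraph" and G :: "'b sgraph" and K :: "'c sgraph"
  assumes "is_graph H" and "is_graph G" and "min_obs_star H G"
  shows "min_obs G K \<longleftrightarrow> ((min_obs H K \<and> \<not> graph_iso K G) \<or> min_obs_star G K)"
proof -
  note gH = assms(1) and gG = assms(2) and ms = assms(3)
  have moHG: "min_obs H G" and cd: "card (verts G) = card (verts H) + 1" using ms by (auto simp: min_obs_star_def)
  obtain \<psi> where psi: "full_hom H G \<psi>" using H_to_G[OF gH gG ms] by blast
  have HG: "full_colourable A G" if "full_colourable A H" for A :: "'c sgraph"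
    using that psi fh_comp unfolding full_colourable_def by blast
  show ?thesis
  proof
    assume mo: "min_obs G K"
    have gK: "is_graph K" using mo by (simp add: min_obs_def)
    show "(min_obs H K \<and> \<not> graph_iso K G) \<or> min_obs_star G K"
    proof (cases "\<exists>S. S \<subset> verts K \<and> \<not> full_colourable (induced K S) H")
      case True
      then obtain S where S: "S \<subset> verts K" and nc: "\<not> full_colourable (induced K S) H" by blast
      obtain \<phi> where ph: "full_hom (induced K S) G \<phi>" using mo S unfolding min_obs_def full_colourable_def by blast
      have eq: "\<phi> ` S = verts G" using obs_surj[OF ph moHG nc] by simp
      have finK: "finite (verts K)" using gK by (simp add: is_graph_def)
      have finS: "finite S" using S finK by (meson finite_subset psubset_imp_subset)
      have "card (verts G) \<le> card S" using eq finS card_image_le by metis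
      moreover have "card S < card (verts K)" using S finK psubset_card_mono by blast
      moreover have "card (verts K) \<le> card (verts G) + 1" using obs_bound[OF mo gG] .
      ultimately have "card (verts K) = card (verts G) + 1" by linarith
      thus ?thesis using mo by (simp add: min_obs_star_def)
    next
      case False
      have "\<not> full_colourable K H" using HG[of K] mo unfolding min_obs_def by blast
      hence "min_obs H K" using False gK by (auto simp: min_obs_def)
      moreover have "\<not> graph_iso K G"
      proof
        assume "graph_iso K G"
        then obtain f where "bij_betw f (verts K) (verts G)"
          and "\<forall>x\<in>verts K. \<forall>y\<in>verts K. (x, y) \<in> edges K \<longleftrightarrow> (f x, f y) \<in> edges G"
          unfolding graph_iso_def by blast
        hence "full_hom K G f" unfolding full_hom_def by (auto simp: bij_betw_def)
        thus False using mo unfolding min_obs_def full_colourable_def by blast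
      qed
      ultimately show ?thesis by blast
    qed
  next
    assume "(min_obs H K \<and> \<not> graph_iso K G) \<or> min_obs_star G K"
    thus "min_obs G K"
    proof
      assume "min_obs_star G K" thus ?thesis by (simp add: min_obs_star_def)
    next
      assume a: "min_obs H K \<and> \<not> graph_iso K G"
      hence mo: "min_obs H K" and ni: "\<not> graph_iso K G" by auto
      have gK: "is_graph K" using mo by (simp add: min_obs_def)
      have nc: "\<not> full_colourable K H" using mo by (simp add: min_obs_def)
      have "\<not> full_colourable K G"
      proof
        assume "full_colourable K G"
        then obtain \<phi> where ph: "full_hom K G \<phi>" unfolding full_colourable_def by blast
        have eq: "\<phi> ` verts K = verts G" using obs_surj[OF ph moHG nc] .
        have ir: "irrefl (edges K)" using gK by (simp add: is_graph_def)
        have "inj_on \<phi> (verts K)" using pd_inj[OF ph min_obs_pd[OF mo] ir] .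
        hence "bij_betw \<phi> (verts K) (verts G)" using eq by (simp add: bij_betw_def)
        hence "graph_iso K G" using ph unfolding graph_iso_def full_hom_def by blast
        thus False using ni by simp
      qed
      moreover have "\<forall>S. S \<subset> verts K \<longrightarrow> full_colourable (induced K S) G"
        using mo HG by (simp add: min_obs_def)
      ultimately show ?thesis using gK by (simp add: min_obs_def)
    qed
  qed
qed

end
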